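(* Let $\mathbf{C}$ be a category with a stable system of monics $\mathcal{M}$ that has pullbacks along $\mathcal{M}$-morphisms and has final pullback complements (FPCs) along $\mathcal{M}$-morphisms. Then the target functor $T:\mathsf{FPC}_v(\mathbf{C},\mathcal{M})\to\mathbf{C}|_{\mathcal{M}}$ is a Grothendieck opfibration.
   Context: A stable system of monics $\mathcal{M}$ in $\mathbf{C}$ is a class of monomorphisms containing all isomorphisms, closed under composition, and stable under pullback; $\rightarrowtail$ denotes morphisms in $\mathcal{M}$. "Has pullbacks along $\mathcal{M}$-morphisms": pullbacks of cospans $A\to B\leftarrowtail B'$ exist. Final pullback complement (FPC): for composable $A\xrightarrow{f}B\xrightarrow{m}C$, a pair $A\xrightarrow{n}F\xrightarrow{g}C$ with $g\circ n=m\circ f$ such that this square is a pullback, and such that for every pullback square $m\circ u=w\circ v$ (with $u:X\to B$, $v:X\to Y$, $w:Y\to C$) and every $t:X\to A$ with $f\circ t=u$, there is a unique $y:Y\to F$ with $g\circ y=w$ and $y\circ v=n\circ t$. "Has FPCs along $\mathcal{M}$-morphisms": FPCs exist whenever $m\in\mathcal{M}$. $\mathbf{C}|_{\mathcal{M}}$ is the category with the objects of $\mathbf{C}$ and the $\mathcal{M}$-morphisms as morphisms. The category $\mathsf{FPC}_v(\mathbf{C},\mathcal{M})$: objects are morphisms $f:A\to B$ of $\mathbf{C}$; a morphism from $f:A\to B$ to $f':A'\to B'$ is a pair $(\alpha,\beta)$ of $\mathcal{M}$-morphisms $\alpha:A\rightarrowtail A'$, $\beta:B\rightarrowtail B'$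 with $\beta\circ f=f'\circ\alpha$ such that $(\alpha,f')$ is an FPC of $(f,\beta)$; composition is componentwise (vertical pasting). The target functor $T$ sends $f:A\to B$ to $B$ and $(\alpha,\beta)$ to $\beta$. For a functor $P:\mathbf{E}\to\mathbf{B}$, a morphism $\varphi:e\to e'$ is op-Cartesian if for every $\psi:e\to e''$ and $g:P(e')\to P(e'')$ with $g\circ P(\varphi)=P(\psi)$ there is a unique $\chi:e'\to e''$ with $\chi\circ\varphi=\psi$ and $P(\chi)=g$; $P$ is a Grothendieck opfibration if for every $f:b\to b'$ and every $e$ with $P(e)=b$ there is an op-Cartesian $\varphi:e\to e'$ with $P(\varphi)=f$. *)

theory Defs
  imports Main
begin

record ('o, 'a) cat =
  Obj :: "'o set"
  Arr :: "'a set"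
  Dom :: "'a \<Rightarrow> 'o"
  Cod :: "'a \<Rightarrow> 'o"
  Comp :: "'a \<Rightarrow> 'a \<Rightarrow> 'a"
  Id :: "'o \<Rightarrow> 'a"

definition category :: "('o, 'a) cat \<Rightarrow> bool" where
  "category C \<longleftrightarrow>
     (\<forall>f\<in>Arr C. Dom C f \<in> Obj C \<and> Cod C f \<in> Obj C) \<and>
     (\<forall>x\<in>Obj C. Id C x \<in> Arr C \<and> Dom C (Id C x) = x \<and> Cod C (Id C x) = x) \<and>
     (\<forall>f\<in>Arr C. \<forall>g\<in>Arr C. Cod C f = Dom C g \<longrightarrow>
        Comp C g f \<in> Arr C \<and> Dom C (Comp C g f) = Dom C f \<and> Cod C (Comp C g f) = Cod C g) \<and>
     (\<forall>f\<in>Arr C. \<forall>g\<in>Arr C. \<forall>h\<in>Arr C. Cod C f = Dom C g \<longrightarrow> Cod C g = Dom C h \<longrightarrow>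
        Comp C h (Comp C g f) = Comp C (Comp C h g) f) \<and>
     (\<forall>f\<in>Arr C. Comp C f (Id C (Dom C f)) = f \<and> Comp C (Id C (Cod C f)) f = f)"

definition is_mono :: "('o, 'a) cat \<Rightarrow> 'a \<Rightarrow> bool" where
  "is_mono C m \<longleftrightarrow> m \<in> Arr C \<and>
     (\<forall>g\<in>Arr C. \<forall>h\<in>Arr C. Cod C g = Dom C m \<longrightarrow> Cod C h = Dom C m \<longrightarrow>
        Dom C g = Dom C h \<longrightarrow> Comp C m g = Comp C m h \<longrightarrow> g = h)"

definition is_iso :: "('o, 'a) cat \<Rightarrow> 'a \<Rightarrow> bool" where
  "is_iso C f \<longleftrightarrow> f \<in> Arr C \<and>
     (\<exists>g\<in>Arr C. Dom C g = Cod C f \<and> Cod C g = Dom C f \<and>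
        Comp C g f = Id C (Dom C f) \<and> Comp C f g = Id C (Cod C f))"

definition is_pullback :: "('o, 'a) cat \<Rightarrow> 'a \<Rightarrow> 'a \<Rightarrow> 'a \<Rightarrow> 'a \<Rightarrow> bool" where
  "is_pullback C f g p q \<longleftrightarrow>
     f \<in> Arr C \<and> g \<in> Arr C \<and> p \<in> Arr C \<and> q \<in> Arr C \<and>
     Cod C f = Cod C g \<and> Cod C p = Dom C f \<and> Cod C q = Dom C g \<and> Dom C p = Dom C q \<and>
     Comp C f p = Comp C g q \<and>
     (\<forall>p'\<in>Arr C. \<forall>q'\<in>Arr C. Dom C p' = Dom C q' \<longrightarrow> Cod C p' = Dom C f \<longrightarrow>
        Cod C q' = Dom C g \<longrightarrow> Comp C f p' = Comp C g q' \<longrightarrow>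
        (\<exists>!u. u \<in> Arr C \<and> Dom C u = Dom C p' \<and> Cod C u = Dom C p \<and>
              Comp C p u = p' \<and> Comp C q u = q'))"

definition stable_system_of_monics :: "('o, 'a) cat \<Rightarrow> 'a set \<Rightarrow> bool" where
  "stable_system_of_monics C M \<longleftrightarrow>
     M \<subseteq> Arr C \<and> (\<forall>m\<in>M. is_mono C m) \<and>
     (\<forall>f\<in>Arr C. is_iso C f \<longrightarrow> f \<in> M) \<and>
     (\<forall>m\<in>M. \<forall>n\<in>M. Cod C m = Dom C n \<longrightarrow> Comp C n m \<in> M) \<and>
     (\<forall>f m p q. m \<in> M \<longrightarrow> is_pullback C f m p q \<longrightarrow> p \<in> M)"

definition has_pullbacks_along :: "('o, 'a) cat \<Rightarrow> 'a set \<Rightarrow> bool" where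
  "has_pullbacks_along C M \<longleftrightarrow>
     (\<forall>f\<in>Arr C. \<forall>m\<in>M. Cod C f = Cod C m \<longrightarrow> (\<exists>p q. is_pullback C f m p q))"

text \<open>is_FPC C f m n g: for A --f--> B --m--> C, the pair A --n--> F --g--> C
  is a final pullback complement.\<close>
definition is_FPC :: "('o, 'a) cat \<Rightarrow> 'a \<Rightarrow> 'a \<Rightarrow> 'a \<Rightarrow> 'a \<Rightarrow> bool" where
  "is_FPC C f m n g \<longleftrightarrow>
     Cod C f = Dom C m \<and> Cod C n = Dom C g \<and>
     Comp C g n = Comp C m f \<and>
     is_pullback C m g f n \<and>
     (\<forall>u v w t. is_pullback C m w u v \<longrightarrow>
        t \<in> Arr C \<longrightarrow> Dom C t = Dom C u \<longrightarrow> Cod C t = Dom C f \<longrightarrow> Comp C f t = u \<longrightarrow>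
        (\<exists>!y. y \<in> Arr C \<and> Dom C y = Cod C v \<and> Cod C y = Dom C g \<and>
              Comp C g y = w \<and> Comp C y v = Comp C n t))"

definition has_FPCs_along :: "('o, 'a) cat \<Rightarrow> 'a set \<Rightarrow> bool" where
  "has_FPCs_along C M \<longleftrightarrow>
     (\<forall>f\<in>Arr C. \<forall>m\<in>M. Cod C f = Dom C m \<longrightarrow> (\<exists>n g. is_FPC C f m n g))"

definition restrict_cat :: "('o, 'a) cat \<Rightarrow> 'a set \<Rightarrow> ('o, 'a) cat" where
  "restrict_cat C M = C\<lparr>Arr := Arr C \<inter> M\<rparr>"

text \<open>FPC_v(C,M): objects are arrows of C; a morphism (alpha,beta) from f to f'
  is encoded as the tuple (f, f', alpha, beta).\<close>
definition FPC_v :: "('o, 'a) cat \<Rightarrow> 'a set \<Rightarrow> ('a, 'a \<times> 'a \<times> 'a \<times> 'a) cat" where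
  "FPC_v C M = \<lparr>
     Obj = Arr C,
     Arr = {(f, f', \<alpha>, \<beta>). f \<in> Arr C \<and> f' \<in> Arr C \<and> \<alpha> \<in> M \<and> \<beta> \<in> M \<and>
              Dom C \<alpha> = Dom C f \<and> Cod C \<alpha> = Dom C f' \<and>
              Dom C \<beta> = Cod C f \<and> Cod C \<beta> = Cod C f' \<and>
              Comp C \<beta> f = Comp C f' \<alpha> \<and> is_FPC C f \<beta> \<alpha> f'},
     Dom = (\<lambda>(f, f', \<alpha>, \<beta>). f),
     Cod = (\<lambda>(f, f', \<alpha>, \<beta>). f'),
     Comp = (\<lambda>(g, g', \<alpha>', \<beta>') (f, f', \<alpha>, \<beta>). (f, g', Comp C \<alpha>' \<alpha>, Comp C \<beta>' \<beta>)),
     Id = (\<lambda>f. (f, f, Id C (Dom C f), Id C (Cod C f))) \<rparr>"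

definition is_functor :: "('o, 'a) cat \<Rightarrow> ('p, 'b) cat \<Rightarrow> ('o \<Rightarrow> 'p) \<Rightarrow> ('a \<Rightarrow> 'b) \<Rightarrow> bool" where
  "is_functor E B F0 F1 \<longleftrightarrow>
     (\<forall>x\<in>Obj E. F0 x \<in> Obj B \<and> F1 (Id E x) = Id B (F0 x)) \<and>
     (\<forall>f\<in>Arr E. F1 f \<in> Arr B \<and> Dom B (F1 f) = F0 (Dom E f) \<and> Cod B (F1 f) = F0 (Cod E f)) \<and>
     (\<forall>f\<in>Arr E. \<forall>g\<in>Arr E. Cod E f = Dom E g \<longrightarrow> F1 (Comp E g f) = Comp B (F1 g) (F1 f))"

definition op_cartesian ::
  "('o, 'a) cat \<Rightarrow> ('p, 'b) cat \<Rightarrow> ('o \<Rightarrow> 'p) \<Rightarrow> ('a \<Rightarrow> 'b) \<Rightarrow> 'a \<Rightarrow> bool" where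
  "op_cartesian E B F0 F1 \<phi> \<longleftrightarrow> \<phi> \<in> Arr E \<and>
     (\<forall>\<psi>\<in>Arr E. \<forall>g\<in>Arr B. Dom E \<psi> = Dom E \<phi> \<longrightarrow> Dom B g = F0 (Cod E \<phi>) \<longrightarrow>
        Cod B g = F0 (Cod E \<psi>) \<longrightarrow> Comp B g (F1 \<phi>) = F1 \<psi> \<longrightarrow>
        (\<exists>!\<chi>. \<chi> \<in> Arr E \<and> Dom E \<chi> = Cod E \<phi> \<and> Cod E \<chi> = Cod E \<psi> \<and>
              Comp E \<chi> \<phi> = \<psi> \<and> F1 \<chi> = g))"

definition grothendieck_opfibration ::
  "('o, 'a) cat \<Rightarrow> ('p, 'b) cat \<Rightarrow> ('o \<Rightarrow> 'p) \<Rightarrow> ('a \<Rightarrow> 'b) \<Rightarrow> bool" where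
  "grothendieck_opfibration E B F0 F1 \<longleftrightarrow> is_functor E B F0 F1 \<and>
     (\<forall>e\<in>Obj E. \<forall>u\<in>Arr B. Dom B u = F0 e \<longrightarrow>
        (\<exists>\<phi>. \<phi> \<in> Arr E \<and> Dom E \<phi> = e \<and> F1 \<phi> = u \<and> op_cartesian E B F0 F1 \<phi>))"

definition target_obj :: "('o, 'a) cat \<Rightarrow> 'a \<Rightarrow> 'o" where
  "target_obj C f = Cod C f"

definition target_arr :: "'a \<times> 'a \<times> 'a \<times> 'a \<Rightarrow> 'a" where
  "target_arr = (\<lambda>(f, f', \<alpha>, \<beta>). \<beta>)"

end

theory Submission
  imports Defs
begin

lemma ex1_uniq: "\<exists>!x. P x \<Longrightarrow> P a \<Longrightarrow> P b \<Longrightarrow> a = b" by blast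

context
  fixes C :: "('o, 'a) cat"
  assumes cat: "category C"
begin

abbreviation cp (infixr "\<cdot>" 70) where "g \<cdot> f \<equiv> Comp C g f"

lemma comp_arr: "f \<in> Arr C \<Longrightarrow> g \<in> Arr C \<Longrightarrow> Cod C f = Dom C g \<Longrightarrow>
   g \<cdot> f \<in> Arr C \<and> Dom C (g \<cdot> f) = Dom C f \<and> Cod C (g \<cdot> f) = Cod C g"
  using cat unfolding category_def by blast

lemma assoc: "f \<in> Arr C \<Longrightarrow> g \<in> Arr C \<Longrightarrow> h \<in> Arr C \<Longrightarrow> Cod C f = Dom C g \<Longrightarrow> Cod C g = Dom C h
   \<Longrightarrow> h \<cdot> (g \<cdot> f) = (h \<cdot> g) \<cdot> f"
  using cat unfolding category_def by blast

lemma obj_dc: "f \<in> Arr C \<Longrightarrow> Dom C f \<in> Obj C \<and> Cod C f \<in> Obj C"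
  using cat unfolding category_def by blast

lemma id_arr: "x \<in> Obj C \<Longrightarrow> Id C x \<in> Arr C \<and> Dom C (Id C x) = x \<and> Cod C (Id C x) = x"
  using cat unfolding category_def by blast

lemma id_r: "f \<in> Arr C \<Longrightarrow> f \<cdot> Id C (Dom C f) = f"
  using cat unfolding category_def by blast

lemma id_l: "f \<in> Arr C \<Longrightarrow> Id C (Cod C f) \<cdot> f = f"
  using cat unfolding category_def by blast

lemma pbD: "is_pullback C f g p q \<Longrightarrow> f \<in> Arr C \<and> g \<in> Arr C \<and> p \<in> Arr C \<and> q \<in> Arr C \<and>
     Cod C f = Cod C g \<and> Cod C p = Dom C f \<and> Cod C q = Dom C g \<and> Dom C p = Dom C q \<and>
     f \<cdot> p = g \<cdot> q"
  unfolding is_pullback_def by blast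

lemma pb_ex1:
  assumes pb: "is_pullback C f g p q" and h: "p' \<in> Arr C" "q' \<in> Arr C" "Dom C p' = Dom C q'"
   "Cod C p' = Dom C f" "Cod C q' = Dom C g" "f \<cdot> p' = g \<cdot> q'"
  shows "\<exists>!z. z \<in> Arr C \<and> Dom C z = Dom C p' \<and> Cod C z = Dom C p \<and> p \<cdot> z = p' \<and> q \<cdot> z = q'"
proof -
  have "\<forall>p'\<in>Arr C. \<forall>q'\<in>Arr C. Dom C p' = Dom C q' \<longrightarrow> Cod C p' = Dom C f \<longrightarrow>
        Cod C q' = Dom C g \<longrightarrow> f \<cdot> p' = g \<cdot> q' \<longrightarrow>
        (\<exists>!u. u \<in> Arr C \<and> Dom C u = Dom C p' \<and> Cod C u = Dom C p \<and>
              p \<cdot> u = p' \<and> q \<cdot> u = q')"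
    using pb unfolding is_pullback_def by (elim conjE)
  from this[rule_format, OF h] show ?thesis .
qed

lemma pb_ex:
  assumes pb: "is_pullback C f g p q" and h: "p' \<in> Arr C" "q' \<in> Arr C" "Dom C p' = Dom C q'"
   "Cod C p' = Dom C f" "Cod C q' = Dom C g" "f \<cdot> p' = g \<cdot> q'"
  shows "\<exists>z. z \<in> Arr C \<and> Dom C z = Dom C p' \<and> Cod C z = Dom C p \<and> p \<cdot> z = p' \<and> q \<cdot> z = q'"
  by (rule ex1_implies_ex[OF pb_ex1[OF pb h]])

lemma pb_uniq:
  assumes pb: "is_pullback C f g p q" and z: "z1 \<in> Arr C" "z2 \<in> Arr C" "Dom C z1 = Dom C z2"
    "Cod C z1 = Dom C p" "Cod C z2 = Dom C p" "p \<cdot> z1 = p \<cdot> z2" "q \<cdot> z1 = q \<cdot> z2"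
  shows "z1 = z2"
proof -
  note d = pbD[OF pb]
  have a1: "p \<cdot> z1 \<in> Arr C" "Dom C (p \<cdot> z1) = Dom C z1" "Cod C (p \<cdot> z1) = Dom C f"
    using comp_arr[of z1 p] z d by auto
  have a2: "q \<cdot> z1 \<in> Arr C" "Dom C (q \<cdot> z1) = Dom C z1" "Cod C (q \<cdot> z1) = Dom C g"
    using comp_arr[of z1 q] z d by auto
  have e: "f \<cdot> (p \<cdot> z1) = g \<cdot> (q \<cdot> z1)"
    using assoc[of z1 p f] assoc[of z1 q g] z d by auto
  have "\<exists>!u. u \<in> Arr C \<and> Dom C u = Dom C (p \<cdot> z1) \<and> Cod C u = Dom C p \<and>
              p \<cdot> u = p \<cdot> z1 \<and> q \<cdot> u = q \<cdot> z1"
    using pb_ex1[OF pb a1(1) a2(1) _ a1(3) a2(3) e] a1(2) a2(2) by simp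
  then show ?thesis by (rule ex1_uniq) (use z a1 in auto)
qed

lemma pb_intro:
  assumes "f \<in> Arr C" "g \<in> Arr C" "p \<in> Arr C" "q \<in> Arr C"
     "Cod C f = Cod C g" "Cod C p = Dom C f" "Cod C q = Dom C g" "Dom C p = Dom C q"
     "f \<cdot> p = g \<cdot> q"
   and ex: "\<And>p' q'. p' \<in> Arr C \<Longrightarrow> q' \<in> Arr C \<Longrightarrow> Dom C p' = Dom C q' \<Longrightarrow>
      Cod C p' = Dom C f \<Longrightarrow> Cod C q' = Dom C g \<Longrightarrow> f \<cdot> p' = g \<cdot> q' \<Longrightarrow>
      \<exists>z. z \<in> Arr C \<and> Dom C z = Dom C p' \<and> Cod C z = Dom C p \<and> p \<cdot> z = p' \<and> q \<cdot> z = q'"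
   and un: "\<And>z1 z2. z1 \<in> Arr C \<Longrightarrow> z2 \<in> Arr C \<Longrightarrow> Dom C z1 = Dom C z2 \<Longrightarrow>
      Cod C z1 = Dom C p \<Longrightarrow> Cod C z2 = Dom C p \<Longrightarrow> p \<cdot> z1 = p \<cdot> z2 \<Longrightarrow> q \<cdot> z1 = q \<cdot> z2 \<Longrightarrow> z1 = z2"
  shows "is_pullback C f g p q"
  unfolding is_pullback_def
proof (intro conjI ballI impI)
  fix p' q' assume h: "p' \<in> Arr C" "q' \<in> Arr C" "Dom C p' = Dom C q'" "Cod C p' = Dom C f"
    "Cod C q' = Dom C g" "f \<cdot> p' = g \<cdot> q'"
  then obtain z where z: "z \<in> Arr C \<and> Dom C z = Dom C p' \<and> Cod C z = Dom C p \<and> p \<cdot> z = p' \<and> q \<cdot> z = q'"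
    using ex by blast
  show "\<exists>!u. u \<in> Arr C \<and> Dom C u = Dom C p' \<and> Cod C u = Dom C p \<and> p \<cdot> u = p' \<and> q \<cdot> u = q'"
  proof (rule ex1I[of _ z])
    show "z \<in> Arr C \<and> Dom C z = Dom C p' \<and> Cod C z = Dom C p \<and> p \<cdot> z = p' \<and> q \<cdot> z = q'" by (fact z)
    fix u assume "u \<in> Arr C \<and> Dom C u = Dom C p' \<and> Cod C u = Dom C p \<and> p \<cdot> u = p' \<and> q \<cdot> u = q'"
    then show "u = z" using z un[of u z] by auto
  qed
qed (use assms in auto)

lemma pb_sym: assumes pb: "is_pullback C f g p q" shows "is_pullback C g f q p"
proof -
  note d = pbD[OF pb]
  show ?thesis
  proof (rule pb_intro)
    fix p' q' assume h: "p' \<in> Arr C" "q' \<in> Arr C" "Dom C p' = Dom C q'" "Cod C p' = Dom C g"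
      "Cod C q' = Dom C f" "g \<cdot> p' = f \<cdot> q'"
    then obtain z where "z \<in> Arr C" "Dom C z = Dom C q'" "Cod C z = Dom C p" "p \<cdot> z = q'" "q \<cdot> z = p'"
      using pb_ex[OF pb, of q' p'] by auto
    then show "\<exists>z. z \<in> Arr C \<and> Dom C z = Dom C p' \<and> Cod C z = Dom C q \<and> q \<cdot> z = p' \<and> p \<cdot> z = q'"
      using h d by auto
  next
    fix z1 z2 assume "z1 \<in> Arr C" "z2 \<in> Arr C" "Dom C z1 = Dom C z2" "Cod C z1 = Dom C q"
      "Cod C z2 = Dom C q" "q \<cdot> z1 = q \<cdot> z2" "p \<cdot> z1 = p \<cdot> z2"
    then show "z1 = z2" using pb_uniq[OF pb, of z1 z2] d by auto
  qed (use d in auto)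
qed

lemma fpcD: "is_FPC C f m n g \<Longrightarrow> is_pullback C m g f n \<and> Cod C f = Dom C m \<and> Cod C n = Dom C g"
  unfolding is_FPC_def by blast

lemma fpc_ex1:
  assumes F: "is_FPC C f m n g" and pb: "is_pullback C m w u v" and t: "t \<in> Arr C" "Dom C t = Dom C u"
   "Cod C t = Dom C f" "f \<cdot> t = u"
  shows "\<exists>!y. y \<in> Arr C \<and> Dom C y = Cod C v \<and> Cod C y = Dom C g \<and> g \<cdot> y = w \<and> y \<cdot> v = n \<cdot> t"
proof -
  have "\<forall>u v w t. is_pullback C m w u v \<longrightarrow>
        t \<in> Arr C \<longrightarrow> Dom C t = Dom C u \<longrightarrow> Cod C t = Dom C f \<longrightarrow> Comp C f t = u \<longrightarrow>
        (\<exists>!y. y \<in> Arr C \<and> Dom C y = Cod C v \<and> Cod C y = Dom C g \<and>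
              Comp C g y = w \<and> Comp C y v = Comp C n t)"
    using F unfolding is_FPC_def by (elim conjE)
  from this[rule_format, OF pb t] show ?thesis .
qed

lemma fpc_ex:
  assumes F: "is_FPC C f m n g" and pb: "is_pullback C m w u v" and t: "t \<in> Arr C" "Dom C t = Dom C u"
   "Cod C t = Dom C f" "f \<cdot> t = u"
  shows "\<exists>y. y \<in> Arr C \<and> Dom C y = Cod C v \<and> Cod C y = Dom C g \<and> g \<cdot> y = w \<and> y \<cdot> v = n \<cdot> t"
  by (rule ex1_implies_ex[OF fpc_ex1[OF F pb t]])

lemma fpc_uniq:
  assumes F: "is_FPC C f m n g" and pb: "is_pullback C m w u v" and t: "t \<in> Arr C" "Dom C t = Dom C u"
   "Cod C t = Dom C f" "f \<cdot> t = u"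
  and "y1 \<in> Arr C \<and> Dom C y1 = Cod C v \<and> Cod C y1 = Dom C g \<and> g \<cdot> y1 = w \<and> y1 \<cdot> v = n \<cdot> t"
  and "y2 \<in> Arr C \<and> Dom C y2 = Cod C v \<and> Cod C y2 = Dom C g \<and> g \<cdot> y2 = w \<and> y2 \<cdot> v = n \<cdot> t"
  shows "y1 = y2"
  using fpc_ex1[OF F pb t] assms(7,8) by (rule ex1_uniq)

lemma fpc_uniq2: "is_FPC C f m n g \<Longrightarrow> is_pullback C m w u v \<Longrightarrow> t \<in> Arr C \<Longrightarrow> Dom C t = Dom C u \<Longrightarrow>
   Cod C t = Dom C f \<Longrightarrow> f \<cdot> t = u \<Longrightarrow>
   y1 \<in> Arr C \<Longrightarrow> Dom C y1 = Cod C v \<Longrightarrow> Cod C y1 = Dom C g \<Longrightarrow> g \<cdot> y1 = w \<Longrightarrow> y1 \<cdot> v = n \<cdot> t \<Longrightarrow>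
   y2 \<in> Arr C \<Longrightarrow> Dom C y2 = Cod C v \<Longrightarrow> Cod C y2 = Dom C g \<Longrightarrow> g \<cdot> y2 = w \<Longrightarrow> y2 \<cdot> v = n \<cdot> t \<Longrightarrow>
   y1 = y2"
  by (rule fpc_uniq[of f m n g w u v t y1 y2]) (assumption | (intro conjI; assumption))+

lemma comp_in [simp]: "f \<in> Arr C \<Longrightarrow> g \<in> Arr C \<Longrightarrow> Cod C f = Dom C g \<Longrightarrow> g \<cdot> f \<in> Arr C"
  using comp_arr by blast
lemma dom_comp [simp]: "f \<in> Arr C \<Longrightarrow> g \<in> Arr C \<Longrightarrow> Cod C f = Dom C g \<Longrightarrow> Dom C (g \<cdot> f) = Dom C f"
  using comp_arr by blast
lemma cod_comp [simp]: "f \<in> Arr C \<Longrightarrow> g \<in> Arr C \<Longrightarrow> Cod C f = Dom C g \<Longrightarrow> Cod C (g \<cdot> f) = Cod C g"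
  using comp_arr by blast

lemma pb_mono:
  assumes pb: "is_pullback C f g p q" and m: "is_mono C m" "Dom C m = Cod C f"
  shows "is_pullback C (m \<cdot> f) (m \<cdot> g) p q"
proof -
  note d = pbD[OF pb]
  have mA: "m \<in> Arr C" using m unfolding is_mono_def by blast
  show ?thesis
  proof (rule pb_intro)
    show "(m \<cdot> f) \<cdot> p = (m \<cdot> g) \<cdot> q" using d mA m assoc[of p f m] assoc[of q g m] by auto
  next
    fix p' q' assume h: "p' \<in> Arr C" "q' \<in> Arr C" "Dom C p' = Dom C q'" "Cod C p' = Dom C (m \<cdot> f)"
      "Cod C q' = Dom C (m \<cdot> g)" "(m \<cdot> f) \<cdot> p' = (m \<cdot> g) \<cdot> q'"
    have h2: "Cod C p' = Dom C f" "Cod C q' = Dom C g" using h d mA m by auto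
    have "m \<cdot> (f \<cdot> p') = m \<cdot> (g \<cdot> q')" using h h2 d mA m assoc[of p' f m] assoc[of q' g m] by auto
    then have "f \<cdot> p' = g \<cdot> q'" using m(1) unfolding is_mono_def using h h2 d m by auto
    then show "\<exists>z. z \<in> Arr C \<and> Dom C z = Dom C p' \<and> Cod C z = Dom C p \<and> p \<cdot> z = p' \<and> q \<cdot> z = q'"
      using pb_ex[OF pb] h h2 by blast
  next
    fix z1 z2 assume "z1 \<in> Arr C" "z2 \<in> Arr C" "Dom C z1 = Dom C z2" "Cod C z1 = Dom C p"
      "Cod C z2 = Dom C p" "p \<cdot> z1 = p \<cdot> z2" "q \<cdot> z1 = q \<cdot> z2"
    then show "z1 = z2" using pb_uniq[OF pb] by blast
  qed (use d mA m in auto)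
qed

lemma pb_paste:
  assumes pb1: "is_pullback C u u1 a b" and pb2: "is_pullback C g' w u1 v"
  shows "is_pullback C (g' \<cdot> u) w a (v \<cdot> b)"
proof -
  note d1 = pbD[OF pb1] and d2 = pbD[OF pb2]
  show ?thesis
  proof (rule pb_intro)
    show "(g' \<cdot> u) \<cdot> a = w \<cdot> v \<cdot> b"
      using d1 d2 assoc[of a u g'] assoc[of b u1 g'] assoc[of b v w] by auto
  next
    fix p' q' assume h: "p' \<in> Arr C" "q' \<in> Arr C" "Dom C p' = Dom C q'" "Cod C p' = Dom C (g' \<cdot> u)"
      "Cod C q' = Dom C w" "(g' \<cdot> u) \<cdot> p' = w \<cdot> q'"
    have h2: "Cod C p' = Dom C u" using h d1 d2 by auto
    have "g' \<cdot> (u \<cdot> p') = w \<cdot> q'" using h h2 d1 d2 assoc[of p' u g'] by auto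
    then obtain x where x: "x \<in> Arr C" "Dom C x = Dom C p'" "Cod C x = Dom C u1" "u1 \<cdot> x = u \<cdot> p'" "v \<cdot> x = q'"
      using pb_ex[OF pb2, of "u \<cdot> p'" q'] h h2 d1 d2 by auto
    then obtain z where z: "z \<in> Arr C" "Dom C z = Dom C p'" "Cod C z = Dom C a" "a \<cdot> z = p'" "b \<cdot> z = x"
      using pb_ex[OF pb1, of p' x] h h2 d1 d2 by auto
    have "(v \<cdot> b) \<cdot> z = q'" using z x d1 d2 assoc[of z b v] by auto
    then show "\<exists>z. z \<in> Arr C \<and> Dom C z = Dom C p' \<and> Cod C z = Dom C a \<and> a \<cdot> z = p' \<and> (v \<cdot> b) \<cdot> z = q'"
      using z by blast
  next
    fix z1 z2 assume h: "z1 \<in> Arr C" "z2 \<in> Arr C" "Dom C z1 = Dom C z2" "Cod C z1 = Dom C a"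
      "Cod C z2 = Dom C a" "a \<cdot> z1 = a \<cdot> z2" "(v \<cdot> b) \<cdot> z1 = (v \<cdot> b) \<cdot> z2"
    have e1: "u1 \<cdot> (b \<cdot> z1) = u1 \<cdot> (b \<cdot> z2)"
      using h d1 assoc[of z1 b u1] assoc[of z2 b u1] assoc[of z1 a u] assoc[of z2 a u] by auto
    have e2: "v \<cdot> (b \<cdot> z1) = v \<cdot> (b \<cdot> z2)"
      using h d1 d2 assoc[of z1 b v] assoc[of z2 b v] by auto
    have "b \<cdot> z1 = b \<cdot> z2" using pb_uniq[OF pb2 _ _ _ _ _ _ e2] e1 h d1 d2 by auto
    then show "z1 = z2" using pb_uniq[OF pb1] h by blast
  qed (use d1 d2 in auto)
qed

lemma core:
  assumes sm: "stable_system_of_monics C M" and hp: "has_pullbacks_along C M"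
    and F1: "is_FPC C f u n g" and uM: "u \<in> M"
    and F2: "is_FPC C f (g' \<cdot> u) \<alpha> h" and gM: "g' \<in> M" and dg: "Dom C g' = Cod C g"
  shows "\<exists>\<gamma>. \<gamma> \<in> Arr C \<and> Dom C \<gamma> = Dom C g \<and> Cod C \<gamma> = Dom C h \<and> h \<cdot> \<gamma> = g' \<cdot> g \<and>
     \<gamma> \<cdot> n = \<alpha> \<and> is_FPC C g g' \<gamma> h"
proof -
  have pb1: "is_pullback C u g f n" using fpcD[OF F1] by blast
  note d1 = pbD[OF pb1]
  have mg: "is_mono C g'" and gA: "g' \<in> Arr C" using sm gM unfolding stable_system_of_monics_def by auto
  have O: "is_pullback C (g' \<cdot> u) h f \<alpha>" using fpcD[OF F2] by blast
  note dO = pbD[OF O]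
  have T0: "Cod C g' = Cod C h" "Dom C \<alpha> = Dom C f" "Cod C \<alpha> = Dom C h" "\<alpha> \<in> Arr C" "h \<in> Arr C"
    using dO d1 gA dg by auto
  note T = d1 gA T0 dg
  have S1: "is_pullback C (g' \<cdot> u) (g' \<cdot> g) f n" using pb_mono[OF pb1 mg] T by auto
  have idA: "Id C (Dom C f) \<in> Arr C" "Dom C (Id C (Dom C f)) = Dom C f" "Cod C (Id C (Dom C f)) = Dom C f"
    using id_arr obj_dc d1 by auto
  have fid: "f \<cdot> Id C (Dom C f) = f" "\<alpha> \<cdot> Id C (Dom C f) = \<alpha>" "n \<cdot> Id C (Dom C f) = n"
    using id_r[of f] id_r[of \<alpha>] id_r[of n] d1 T0 by auto
  obtain \<gamma> where g1: "\<gamma> \<in> Arr C" "Dom C \<gamma> = Cod C n" "Cod C \<gamma> = Dom C h" "h \<cdot> \<gamma> = g' \<cdot> g"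
     "\<gamma> \<cdot> n = \<alpha>"
    using fpc_ex[OF F2 S1 idA(1)] idA fid T by auto
  obtain q p where "is_pullback C h g' q p" using hp T0(5) gM T0(1) unfolding has_pullbacks_along_def by (metis (no_types))
  then have PB: "is_pullback C g' h p q" by (rule pb_sym)
  note dP = pbD[OF PB]
  obtain k where k: "k \<in> Arr C" "Dom C k = Dom C g" "Cod C k = Dom C p" "p \<cdot> k = g" "q \<cdot> k = \<gamma>"
    using pb_ex[OF PB, of g \<gamma>] T g1 by auto
  note T = T g1 dP k
  have kn: "k \<cdot> n \<in> Arr C" "Dom C (k \<cdot> n) = Dom C f" "Cod C (k \<cdot> n) = Dom C p"
    using T by auto
  have pkn: "p \<cdot> (k \<cdot> n) = u \<cdot> f" using T assoc[of n k p] by auto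
  have qkn: "q \<cdot> (k \<cdot> n) = \<alpha>" using T assoc[of n k q] by auto
  have S5: "is_pullback C u p f (k \<cdot> n)"
  proof (rule pb_intro)
    fix a b assume h: "a \<in> Arr C" "b \<in> Arr C" "Dom C a = Dom C b" "Cod C a = Dom C u"
      "Cod C b = Dom C p" "u \<cdot> a = p \<cdot> b"
    have "(g' \<cdot> u) \<cdot> a = h \<cdot> (q \<cdot> b)"
      using h T assoc[of a u g'] assoc[of b p g'] assoc[of b q h] by auto
    then obtain c where c: "c \<in> Arr C" "Dom C c = Dom C a" "Cod C c = Dom C f" "f \<cdot> c = a" "\<alpha> \<cdot> c = q \<cdot> b"
      using pb_ex[OF O, of a "q \<cdot> b"] h T by auto
    have e1: "p \<cdot> ((k \<cdot> n) \<cdot> c) = p \<cdot> b"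
      using c h T pkn assoc[of c "k \<cdot> n" p] assoc[of c f u] by auto
    have e2: "q \<cdot> ((k \<cdot> n) \<cdot> c) = q \<cdot> b"
      using c h T qkn assoc[of c "k \<cdot> n" q] by auto
    have "(k \<cdot> n) \<cdot> c = b" using pb_uniq[OF PB _ _ _ _ _ e1 e2] c h T kn by auto
    then show "\<exists>z. z \<in> Arr C \<and> Dom C z = Dom C a \<and> Cod C z = Dom C f \<and> f \<cdot> z = a \<and> (k \<cdot> n) \<cdot> z = b"
      using c by blast
  next
    fix z1 z2 assume h: "z1 \<in> Arr C" "z2 \<in> Arr C" "Dom C z1 = Dom C z2" "Cod C z1 = Dom C f"
      "Cod C z2 = Dom C f" "f \<cdot> z1 = f \<cdot> z2" "(k \<cdot> n) \<cdot> z1 = (k \<cdot> n) \<cdot> z2"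
    have "\<alpha> \<cdot> z1 = q \<cdot> ((k \<cdot> n) \<cdot> z1)"
      using h(1,4) dP kn qkn assoc[of z1 "k \<cdot> n" q] by simp
    moreover have "\<alpha> \<cdot> z2 = q \<cdot> ((k \<cdot> n) \<cdot> z2)"
      using h(2,5) dP kn qkn assoc[of z2 "k \<cdot> n" q] by simp
    ultimately have "\<alpha> \<cdot> z1 = \<alpha> \<cdot> z2" using h(7) by simp
    then show "z1 = z2" using pb_uniq[OF O] h by blast
  qed (use T kn pkn in auto)
  obtain y where y: "y \<in> Arr C" "Dom C y = Dom C p" "Cod C y = Dom C g" "g \<cdot> y = p" "y \<cdot> (k \<cdot> n) = n"
    using fpc_ex[OF F1 S5 idA(1)] idA fid kn T by auto
  have ykA: "y \<cdot> k \<in> Arr C" "Dom C (y \<cdot> k) = Dom C g" "Cod C (y \<cdot> k) = Dom C g"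
    using comp_arr[of k y] k y by auto
  have gidA: "Id C (Dom C g) \<in> Arr C" "Dom C (Id C (Dom C g)) = Dom C g" "Cod C (Id C (Dom C g)) = Dom C g"
    using id_arr obj_dc d1 by auto
  have yk1: "g \<cdot> (y \<cdot> k) = g"
  proof -
    have "g \<cdot> (y \<cdot> k) = (g \<cdot> y) \<cdot> k" by (rule assoc) (simp_all add: k y d1)
    then show ?thesis using y(4) k(4) by simp
  qed
  have yk2: "(y \<cdot> k) \<cdot> n = n \<cdot> Id C (Dom C f)"
  proof -
    have "y \<cdot> (k \<cdot> n) = (y \<cdot> k) \<cdot> n" by (rule assoc) (simp_all add: k y d1)
    then show ?thesis using y(5) fid(3) by simp
  qed
  have yk3: "g \<cdot> Id C (Dom C g) = g" using id_r d1 by blast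
  have yk4: "Id C (Dom C g) \<cdot> n = n \<cdot> Id C (Dom C f)" using id_l[of n] fid(3) d1 by simp
  have yk: "y \<cdot> k = Id C (Dom C g)"
    by (rule fpc_uniq2[OF F1 pb1 idA fid(1) ykA(1) _ ykA(3) yk1 yk2 gidA(1) _ gidA(3) yk3 yk4])
      (simp_all add: ykA gidA d1)
  have S5': "is_pullback C (g' \<cdot> u) (g' \<cdot> p) f (k \<cdot> n)" using pb_mono[OF S5 mg] T by auto
  have gyA: "\<gamma> \<cdot> y \<in> Arr C" "Dom C (\<gamma> \<cdot> y) = Dom C p" "Cod C (\<gamma> \<cdot> y) = Dom C h"
    using comp_arr[of y \<gamma>] g1 y d1 by auto
  have gy1: "h \<cdot> (\<gamma> \<cdot> y) = g' \<cdot> p"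
  proof -
    have "h \<cdot> (\<gamma> \<cdot> y) = (h \<cdot> \<gamma>) \<cdot> y" by (rule assoc) (simp_all add: g1 y d1 T0)
    also have "\<dots> = (g' \<cdot> g) \<cdot> y" using g1(4) by simp
    also have "\<dots> = g' \<cdot> (g \<cdot> y)" by (rule assoc[symmetric]) (simp_all add: y d1 gA dg)
    finally show ?thesis using y(4) by simp
  qed
  have gy2: "(\<gamma> \<cdot> y) \<cdot> (k \<cdot> n) = \<alpha> \<cdot> Id C (Dom C f)"
  proof -
    have "\<gamma> \<cdot> (y \<cdot> (k \<cdot> n)) = (\<gamma> \<cdot> y) \<cdot> (k \<cdot> n)" by (rule assoc) (simp_all add: g1 y d1 kn)
    then show ?thesis using y(5) g1(5) fid(2) by simp
  qed
  have gy3: "h \<cdot> q = g' \<cdot> p" using dP by simp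
  have gy4: "q \<cdot> (k \<cdot> n) = \<alpha> \<cdot> Id C (Dom C f)" using qkn fid by simp
  have gy: "\<gamma> \<cdot> y = q"
    by (rule fpc_uniq2[OF F2 S5' idA fid(1) gyA(1) _ gyA(3) gy1 gy2 _ _ _ gy3 gy4])
      (simp_all add: gyA kn dP)
  have PBg: "is_pullback C g' h g \<gamma>"
  proof (rule pb_intro)
    fix p' q' assume h: "p' \<in> Arr C" "q' \<in> Arr C" "Dom C p' = Dom C q'" "Cod C p' = Dom C g'"
      "Cod C q' = Dom C h" "g' \<cdot> p' = h \<cdot> q'"
    obtain z where z: "z \<in> Arr C" "Dom C z = Dom C p'" "Cod C z = Dom C p" "p \<cdot> z = p'" "q \<cdot> z = q'"
      using pb_ex[OF PB, of p' q'] h by auto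
    have "g \<cdot> (y \<cdot> z) = p'" "\<gamma> \<cdot> (y \<cdot> z) = q'"
      using z y T gy assoc[of z y g] assoc[of z y \<gamma>] by auto
    then show "\<exists>z. z \<in> Arr C \<and> Dom C z = Dom C p' \<and> Cod C z = Dom C g \<and> g \<cdot> z = p' \<and> \<gamma> \<cdot> z = q'"
      using z y by (intro exI[of _ "y \<cdot> z"]) auto
  next
    fix z1 z2 assume h: "z1 \<in> Arr C" "z2 \<in> Arr C" "Dom C z1 = Dom C z2" "Cod C z1 = Dom C g"
      "Cod C z2 = Dom C g" "g \<cdot> z1 = g \<cdot> z2" "\<gamma> \<cdot> z1 = \<gamma> \<cdot> z2"
    have e1: "p \<cdot> (k \<cdot> z1) = p \<cdot> (k \<cdot> z2)" using h T assoc[of z1 k p] assoc[of z2 k p] by auto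
    have e2: "q \<cdot> (k \<cdot> z1) = q \<cdot> (k \<cdot> z2)" using h T assoc[of z1 k q] assoc[of z2 k q] by auto
    have "k \<cdot> z1 = k \<cdot> z2" using pb_uniq[OF PB _ _ _ _ _ e1 e2] h T by auto
    then have "(y \<cdot> k) \<cdot> z1 = (y \<cdot> k) \<cdot> z2" using h T y assoc[of z1 k y] assoc[of z2 k y] by auto
    then have "Id C (Cod C z1) \<cdot> z1 = Id C (Cod C z2) \<cdot> z2" using yk h(4,5) by simp
    then show "z1 = z2" using id_l[of z1] id_l[of z2] h(1,2) by simp
  qed (use T in auto)
  have FP: "is_FPC C g g' \<gamma> h"
    unfolding is_FPC_def
  proof (intro conjI allI impI)
    fix u1 v w t assume pw: "is_pullback C g' w u1 v" and t: "t \<in> Arr C" "Dom C t = Dom C u1"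
      "Cod C t = Dom C g" "g \<cdot> t = u1"
    note dw = pbD[OF pw]
    obtain b a where "is_pullback C u1 u b a" using hp uM dw dg d1 unfolding has_pullbacks_along_def by (metis (no_types))
    then have PBx: "is_pullback C u u1 a b" by (rule pb_sym)
    note dx = pbD[OF PBx]
    have Pst: "is_pullback C (g' \<cdot> u) w a (v \<cdot> b)" by (rule pb_paste[OF PBx pw])
    have "u \<cdot> a = g \<cdot> (t \<cdot> b)" using dx t T assoc[of b t g] by auto
    then obtain t2 where t2: "t2 \<in> Arr C" "Dom C t2 = Dom C a" "Cod C t2 = Dom C f" "f \<cdot> t2 = a" "n \<cdot> t2 = t \<cdot> b"
      using pb_ex[OF pb1, of a "t \<cdot> b"] dx t T by auto
    obtain y' where y': "y' \<in> Arr C" "Dom C y' = Cod C (v \<cdot> b)" "Cod C y' = Dom C h" "h \<cdot> y' = w"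
        "y' \<cdot> (v \<cdot> b) = \<alpha> \<cdot> t2"
      using fpc_ex[OF F2 Pst t2(1)] t2 by auto
    have cvb: "Cod C (v \<cdot> b) = Cod C v" using dw dx by auto
    have Psq: "is_pullback C (g' \<cdot> u) (w \<cdot> v) a b" using pb_mono[OF PBx mg] dw T by auto
    have yv: "y' \<cdot> v = \<gamma> \<cdot> t"
    proof (rule fpc_uniq2[OF F2 Psq t2(1)])
      show "h \<cdot> (y' \<cdot> v) = w \<cdot> v" using y' dw cvb T assoc[of v y' h] by auto
      show "(y' \<cdot> v) \<cdot> b = \<alpha> \<cdot> t2" using y' dw dx cvb T assoc[of b v y'] by auto
      show "h \<cdot> (\<gamma> \<cdot> t) = w \<cdot> v" using t dw T assoc[of t \<gamma> h] assoc[of t g g'] by auto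
      show "(\<gamma> \<cdot> t) \<cdot> b = \<alpha> \<cdot> t2" using t t2 dw dx T assoc[of b t \<gamma>] assoc[of t2 n \<gamma>] by auto
    qed (use t t2 y' dw dx cvb T in auto)
    show "\<exists>!y. y \<in> Arr C \<and> Dom C y = Cod C v \<and> Cod C y = Dom C h \<and> h \<cdot> y = w \<and> y \<cdot> v = \<gamma> \<cdot> t"
    proof (rule ex1I[of _ y'])
      show "y' \<in> Arr C \<and> Dom C y' = Cod C v \<and> Cod C y' = Dom C h \<and> h \<cdot> y' = w \<and> y' \<cdot> v = \<gamma> \<cdot> t"
        using y' yv cvb by auto
      fix y'' assume yy: "y'' \<in> Arr C \<and> Dom C y'' = Cod C v \<and> Cod C y'' = Dom C h \<and> h \<cdot> y'' = w \<and> y'' \<cdot> v = \<gamma> \<cdot> t"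
      have "y'' \<cdot> (v \<cdot> b) = \<alpha> \<cdot> t2"
        using yy t t2 dw dx T assoc[of b v y''] assoc[of b t \<gamma>] assoc[of t2 n \<gamma>] by auto
      then show "y'' = y'" using fpc_uniq2[OF F2 Pst t2(1)] yy y' t2 cvb by auto
    qed
  qed (use T PBg in auto)
  show ?thesis using g1 FP T by auto
qed

lemma core_uniq:
  assumes F1: "is_FPC C f u n g" and gM: "is_mono C g'" and dg: "Dom C g' = Cod C g"
    and F2: "is_FPC C f (g' \<cdot> u) \<alpha> h"
    and a: "\<gamma>1 \<in> Arr C" "Dom C \<gamma>1 = Dom C g" "Cod C \<gamma>1 = Dom C h" "h \<cdot> \<gamma>1 = g' \<cdot> g" "\<gamma>1 \<cdot> n = \<alpha>"
    and b: "\<gamma>2 \<in> Arr C" "Dom C \<gamma>2 = Dom C g" "Cod C \<gamma>2 = Dom C h" "h \<cdot> \<gamma>2 = g' \<cdot> g" "\<gamma>2 \<cdot> n = \<alpha>"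
  shows "\<gamma>1 = \<gamma>2"
proof -
  have pb1: "is_pullback C u g f n" using fpcD[OF F1] by blast
  note d1 = pbD[OF pb1]
  have S1: "is_pullback C (g' \<cdot> u) (g' \<cdot> g) f n" using pb_mono[OF pb1 gM] d1 dg by auto
  have idA: "Id C (Dom C f) \<in> Arr C" "Dom C (Id C (Dom C f)) = Dom C f" "Cod C (Id C (Dom C f)) = Dom C f"
    using id_arr obj_dc d1 by auto
  have O: "is_pullback C (g' \<cdot> u) h f \<alpha>" using fpcD[OF F2] by blast
  note dO = pbD[OF O]
  have fid: "f \<cdot> Id C (Dom C f) = f" "\<alpha> \<cdot> Id C (Dom C f) = \<alpha>"
    using id_r[of f] id_r[of \<alpha>] d1 dO by auto
  show ?thesis
    by (rule fpc_uniq2[OF F2 S1 idA(1)]) (use a b d1 idA fid in auto)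
qed

end

theorem mainTheorem3:
  fixes C :: "('o, 'a) cat" and M :: "'a set"
  assumes "category C"
    and "stable_system_of_monics C M"
    and "has_pullbacks_along C M"
    and "has_FPCs_along C M"
  shows "grothendieck_opfibration (FPC_v C M) (restrict_cat C M) (target_obj C) target_arr"
proof -
  note cat = assms(1)
  have sm: "stable_system_of_monics C M" by (fact assms(2))
  have hp: "has_pullbacks_along C M" by (fact assms(3))
  have MA: "M \<subseteq> Arr C" and stab: "\<And>f m p q. m \<in> M \<Longrightarrow> is_pullback C f m p q \<Longrightarrow> p \<in> M"
    and Mmono: "\<And>m. m \<in> M \<Longrightarrow> is_mono C m"
    using sm unfolding stable_system_of_monics_def by blast+
  have B: "Arr (restrict_cat C M) = Arr C \<inter> M" "Dom (restrict_cat C M) = Dom C"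
    "Cod (restrict_cat C M) = Cod C" "Comp (restrict_cat C M) = Comp C" "Id (restrict_cat C M) = Id C"
    "Obj (restrict_cat C M) = Obj C"
    unfolding restrict_cat_def by simp_all
  have E: "Obj (FPC_v C M) = Arr C"
    "Arr (FPC_v C M) = {(f, f', \<alpha>, \<beta>). f \<in> Arr C \<and> f' \<in> Arr C \<and> \<alpha> \<in> M \<and> \<beta> \<in> M \<and>
              Dom C \<alpha> = Dom C f \<and> Cod C \<alpha> = Dom C f' \<and>
              Dom C \<beta> = Cod C f \<and> Cod C \<beta> = Cod C f' \<and>
              Comp C \<beta> f = Comp C f' \<alpha> \<and> is_FPC C f \<beta> \<alpha> f'}"
    "Dom (FPC_v C M) = (\<lambda>(f, f', \<alpha>, \<beta>). f)"
    "Cod (FPC_v C M) = (\<lambda>(f, f', \<alpha>, \<beta>). f')"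
    "Comp (FPC_v C M) = (\<lambda>(g, g', \<alpha>', \<beta>') (f, f', \<alpha>, \<beta>). (f, g', Comp C \<alpha>' \<alpha>, Comp C \<beta>' \<beta>))"
    "Id (FPC_v C M) = (\<lambda>f. (f, f, Id C (Dom C f), Id C (Cod C f)))"
    unfolding FPC_v_def by simp_all
  have func: "is_functor (FPC_v C M) (restrict_cat C M) (target_obj C) target_arr"
    unfolding is_functor_def B E target_obj_def target_arr_def
    using obj_dc[OF cat] MA by auto
  have opc: "\<exists>\<phi>. \<phi> \<in> Arr (FPC_v C M) \<and> Dom (FPC_v C M) \<phi> = e \<and> target_arr \<phi> = u \<and>
        op_cartesian (FPC_v C M) (restrict_cat C M) (target_obj C) target_arr \<phi>"
    if e: "e \<in> Arr C" and u: "u \<in> Arr C \<inter> M" "Dom C u = Cod C e" for e u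
  proof -
    obtain n g where F1: "is_FPC C e u n g" using assms(4) e u unfolding has_FPCs_along_def by (metis IntD2 u(2))
    have pb1: "is_pullback C u g e n" using fpcD[OF cat F1] by blast
    note d1 = pbD[OF cat pb1]
    have nM: "n \<in> M" using stab[OF _ pb_sym[OF cat pb1]] u by blast
    have cm: "Comp C g n = Comp C u e" using F1 unfolding is_FPC_def by blast
    define \<phi> where "\<phi> = (e, g, n, u)"
    have phiA: "\<phi> \<in> Arr (FPC_v C M)" unfolding \<phi>_def E using e u d1 nM F1 cm by auto
    have "op_cartesian (FPC_v C M) (restrict_cat C M) (target_obj C) target_arr \<phi>"
      unfolding op_cartesian_def
    proof (intro conjI ballI impI)
      show "\<phi> \<in> Arr (FPC_v C M)" by (fact phiA)
      fix \<psi> g' assume psi: "\<psi> \<in> Arr (FPC_v C M)" and g': "g' \<in> Arr (restrict_cat C M)"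
        and h1: "Dom (FPC_v C M) \<psi> = Dom (FPC_v C M) \<phi>"
        and h2: "Dom (restrict_cat C M) g' = target_obj C (Cod (FPC_v C M) \<phi>)"
        and h3: "Cod (restrict_cat C M) g' = target_obj C (Cod (FPC_v C M) \<psi>)"
        and h4: "Comp (restrict_cat C M) g' (target_arr \<phi>) = target_arr \<psi>"
      obtain f0 h \<alpha> \<beta> where psid: "\<psi> = (f0, h, \<alpha>, \<beta>)" by (cases \<psi>) auto
      have f0: "f0 = e" using h1 unfolding psid \<phi>_def E by simp
      have gM: "g' \<in> M" "g' \<in> Arr C" using g' B by auto
      have dg: "Dom C g' = Cod C g" using h2 unfolding B \<phi>_def E target_obj_def by simp
      have cg: "Cod C g' = Cod C h" using h3 unfolding B psid E target_obj_def by simp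
      have beta: "\<beta> = Comp C g' u" using h4 unfolding B psid \<phi>_def target_arr_def by simp
      have psiA: "h \<in> Arr C" "\<alpha> \<in> M" "Dom C \<alpha> = Dom C e" "Cod C \<alpha> = Dom C h"
         "is_FPC C e (Comp C g' u) \<alpha> h"
        using psi unfolding psid E f0 beta by auto
      obtain \<gamma> where g1: "\<gamma> \<in> Arr C" "Dom C \<gamma> = Dom C g" "Cod C \<gamma> = Dom C h" "Comp C h \<gamma> = Comp C g' g"
          "Comp C \<gamma> n = \<alpha>" "is_FPC C g g' \<gamma> h"
        using core[OF cat sm hp F1 _ psiA(5) gM(1) dg] u by blast
      have gaM: "\<gamma> \<in> M" using stab[OF gM(1) pb_sym[OF cat conjunct1[OF fpcD[OF cat g1(6)]]]] .
      define \<chi> where "\<chi> = (g, h, \<gamma>, g')"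
      show "\<exists>!\<chi>. \<chi> \<in> Arr (FPC_v C M) \<and> Dom (FPC_v C M) \<chi> = Cod (FPC_v C M) \<phi> \<and>
              Cod (FPC_v C M) \<chi> = Cod (FPC_v C M) \<psi> \<and>
              Comp (FPC_v C M) \<chi> \<phi> = \<psi> \<and> target_arr \<chi> = g'"
      proof (rule ex1I[of _ \<chi>])
        show "\<chi> \<in> Arr (FPC_v C M) \<and> Dom (FPC_v C M) \<chi> = Cod (FPC_v C M) \<phi> \<and>
              Cod (FPC_v C M) \<chi> = Cod (FPC_v C M) \<psi> \<and>
              Comp (FPC_v C M) \<chi> \<phi> = \<psi> \<and> target_arr \<chi> = g'"
          unfolding \<chi>_def \<phi>_def psid E target_arr_def f0 beta
          using d1 psiA gM dg cg g1 gaM by auto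
      next
        fix \<chi>' assume c: "\<chi>' \<in> Arr (FPC_v C M) \<and> Dom (FPC_v C M) \<chi>' = Cod (FPC_v C M) \<phi> \<and>
              Cod (FPC_v C M) \<chi>' = Cod (FPC_v C M) \<psi> \<and>
              Comp (FPC_v C M) \<chi>' \<phi> = \<psi> \<and> target_arr \<chi>' = g'"
        obtain a b c' d where cd: "\<chi>' = (a, b, c', d)" by (cases \<chi>') auto
        have cc: "a = g" "b = h" "d = g'" "Comp C c' n = \<alpha>" "c' \<in> Arr C" "Dom C c' = Dom C g"
          "Cod C c' = Dom C h" "Comp C h c' = Comp C g' g"
          using c MA unfolding cd \<phi>_def psid E target_arr_def by auto
        have "c' = \<gamma>"
          by (rule core_uniq[OF cat F1 Mmono[OF gM(1)] dg psiA(5) cc(5-8) cc(4) g1(1-5)])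
        then show "\<chi>' = \<chi>" unfolding cd \<chi>_def using cc by simp
      qed
    qed
    then show ?thesis using phiA unfolding \<phi>_def E target_arr_def by auto
  qed
  show ?thesis unfolding grothendieck_opfibration_def
    using func opc unfolding B E(1) target_obj_def by blast
qed

end
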